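(* Let $Q(x,y,Z)=(x-1)^2(y-1)^2-\dfrac{(Z-1)^4}{Z^2}xy$ and $D_Q=\{(x,y,Z)\in(\mathbb{C}^\times)^3 : Q(x,y,Z)=0,\ |x|=|y|=1,\ |Z|>1\}$. The map $(x,y,Z)\mapsto Z$ defines a fibration of $D_Q\setminus\{(-1,-1,3+2\sqrt2)\}$ above the interval $(1,3+2\sqrt2)$. *)

theory Defs
  imports "HOL-Analysis.Analysis"
begin

definition Q :: "complex \<Rightarrow> complex \<Rightarrow> complex \<Rightarrow> complex" where
  "Q x y Z = (x - 1)^2 * (y - 1)^2 - ((Z - 1)^4 / Z^2) * x * y"

definition D_Q :: "(complex \<times> complex \<times> complex) set" where
  "D_Q = {(x, y, Z). x \<noteq> 0 \<and> y \<noteq> 0 \<and> Z \<noteq> 0 \<and> Q x y Z = 0 \<and>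
                     norm x = 1 \<and> norm y = 1 \<and> norm Z > 1}"

definition locally_trivial_fibration ::
  "('a::topological_space) set \<Rightarrow> ('a \<Rightarrow> 'b::topological_space) \<Rightarrow> 'b set \<Rightarrow> bool" where
  "locally_trivial_fibration E p B \<longleftrightarrow>
     continuous_on E p \<and> p ` E = B \<and>
     (\<forall>b\<in>B. \<exists>U. openin (top_of_set B) U \<and> b \<in> U \<and>
        (\<exists>(F :: 'a set) h k. homeomorphism (E \<inter> p -` U) (U \<times> F) h k \<and>
              (\<forall>e \<in> E \<inter> p -` U. fst (h e) = p e)))"

end

theory Submission
  imports Defs
begin



lemma sq_id:
  fixes a p :: real
  assumes "a^2 + p^2 = 1"
  shows "(- ((Complex a p)^2) - 1)^2 = - 4 * (complex_of_real a)^2 * (- ((Complex a p)^2))"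
proof -
  have "p*p = 1 - a*a" using assms by (simp add: power2_eq_square)
  then show ?thesis
    by (simp add: complex_eq_iff power2_eq_square algebra_simps) algebra
qed

lemma unit_sqrt:
  assumes "norm x = 1" "x \<noteq> 1"
  shows "Re (csqrt (-x)) > 0" "(Re (csqrt (-x)))^2 + (Im (csqrt (-x)))^2 = 1"
        "x = - ((csqrt (-x))^2)"
proof -
  define w where "w = csqrt (-x)"
  have x: "x = - (w^2)" unfolding w_def by simp
  then show "x = - ((csqrt (-x))^2)" unfolding w_def .
  have "norm w ^2 = 1" using assms by (metis norm_power x norm_minus_cancel)
  then show "(Re (csqrt (-x)))^2 + (Im (csqrt (-x)))^2 = 1" unfolding w_def[symmetric] cmod_power2 .
  have "Re w > 0"
  proof (rule ccontr)
    assume "\<not> Re w > 0"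
    then have "Re w = 0" using Re_csqrt[of "-x"] unfolding w_def by linarith
    then have "x = of_real ((Im w)^2)" using x
      by (simp add: complex_eq_iff power2_eq_square)
    moreover then have "norm x = (Im w)^2" by (simp only: norm_of_real) simp
    ultimately have "x = of_real 1" using assms by metis
    then show False using assms by simp
  qed
  then show "Re (csqrt (-x)) > 0" unfolding w_def .
qed


definition r0 :: real where "r0 = 3 + 2 * sqrt 2"
definition gz :: "real \<Rightarrow> real" where "gz z = ((z-1)^2/(4*z))^2"

lemma r0_bounds: "r0 > 5" "(r0 - 3)^2 = 8"
proof -
  have s: "sqrt 2 > 1" by simp
  show "r0 > 5" unfolding r0_def using s by simp
  show "(r0 - 3)^2 = 8" unfolding r0_def by (simp add: power2_eq_square algebra_simps)
qed

lemma gz_bounds: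
  assumes "1 < z" "z < r0"
  shows "0 < gz z" "gz z < 1"
proof -
  have s: "sqrt 2 > 1" "sqrt 2 ^2 = 2" by simp_all
  have "(z-3)^2 < 8"
  proof -
    have "z - 3 < 2 * sqrt 2" using assms unfolding r0_def by simp
    moreover have "3 - z < 2 * sqrt 2" using assms(1) s(1) by linarith
    ultimately have "\<bar>z - 3\<bar> < 2 * sqrt 2" by auto
    then have "\<bar>z - 3\<bar>^2 < (2 * sqrt 2)^2" by (intro power_strict_mono) auto
    then show ?thesis using s by (simp add: power_mult_distrib)
  qed
  then have "(z-1)^2 < 4*z" by (simp add: power2_eq_square algebra_simps)
  then have h: "(z-1)^2/(4*z) < 1" "0 < (z-1)^2/(4*z)" using assms by auto
  show "0 < gz z" unfolding gz_def using h by (metis zero_less_power)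
  show "gz z < 1" unfolding gz_def using h by (simp add: power_less_one_iff)
qed

lemma z_le_r0:
  assumes "1 < z" "(z-1)^2/(4*z) \<le> 1"
  shows "z \<le> r0"
proof -
  have "(z-1)^2 \<le> 4*z" using assms by (simp add: divide_le_eq)
  then have "(z-3)^2 \<le> 8" by (simp add: power2_eq_square algebra_simps)
  then have "(z-3)^2 \<le> (r0-3)^2" using r0_bounds by simp
  then have "\<bar>z-3\<bar> \<le> \<bar>r0-3\<bar>" using abs_le_square_iff by blast
  then show ?thesis using r0_bounds by auto
qed

definition EE :: "(complex \<times> complex \<times> complex) set" where
  "EE = D_Q - {(-1, -1, complex_of_real (3 + 2 * sqrt 2))}"

definition TT :: "(real \<times> real \<times> real) set" where
  "TT = {(z,p,q). 1<z \<and> z<r0 \<and> -1<p \<and> p<1 \<and> -1<q \<and> q<1 \<and> (1-p^2)*(1-q^2) = gz z}"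

lemma not_one:
  assumes "Q x y Z = 0" "y \<noteq> 0" "Z \<noteq> 0" "norm Z > 1"
  shows "x \<noteq> 1"
proof
  assume "x = 1"
  then have "(Z-1)^4/Z^2 * y = 0" using assms(1) by (simp add: Q_def)
  then have "Z = 1" using assms(2,3) by simp
  then show False using assms(4) by simp
qed

lemma EE_to_TT:
  assumes "(x,y,Z) \<in> EE"
  shows "(Re Z, Im (csqrt (-x)), Im (csqrt (-y))) \<in> TT" "Z = of_real (Re Z)"
proof -
  have nz: "x \<noteq> 0" "y \<noteq> 0" "Z \<noteq> 0" and Q0: "Q x y Z = 0" and nm: "norm x = 1" "norm y = 1" "norm Z > 1"
    and nex: "(x,y,Z) \<noteq> (-1, -1, complex_of_real (3 + 2 * sqrt 2))"
    using assms by (auto simp: EE_def D_Q_def)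
  have x1: "x \<noteq> 1" using not_one[OF Q0 nz(2,3) nm(3)] .
  have Q0': "Q y x Z = 0" using Q0 by (simp add: Q_def mult.commute mult.left_commute)
  have y1: "y \<noteq> 1" using not_one[OF Q0' nz(1,3) nm(3)] .
  define a where "a = Re (csqrt (-x))"
  define p where "p = Im (csqrt (-x))"
  define b where "b = Re (csqrt (-y))"
  define q where "q = Im (csqrt (-y))"
  have a: "a > 0" "a^2 + p^2 = 1" "x = - ((Complex a p)^2)"
    using unit_sqrt(1,2)[OF nm(1) x1] unfolding a_def p_def complex.collapse
    by (auto intro: unit_sqrt(3)[OF nm(1) x1])
  have b: "b > 0" "b^2 + q^2 = 1" "y = - ((Complex b q)^2)"
    using unit_sqrt(1,2)[OF nm(2) y1] unfolding b_def q_def complex.collapse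
    by (auto intro: unit_sqrt(3)[OF nm(2) y1])
  have ex: "(x-1)^2 = - 4 * (of_real a)^2 * x" using sq_id[OF a(2)] a(3) by simp
  have ey: "(y-1)^2 = - 4 * (of_real b)^2 * y" using sq_id[OF b(2)] b(3) by simp
  define K where "K = (Z-1)^2/Z"
  have e1: "(x-1)^2*(y-1)^2 = (of_real (4*a*b))^2 * x * y"
    unfolding ex ey by (simp add: power_mult_distrib)
  have e2: "(Z-1)^4/Z^2 = K^2" unfolding K_def
    by (simp add: power_divide flip: power_mult)
  have "(of_real (4*a*b))^2 * x * y = K^2 * x * y"
    using Q0 unfolding Q_def e1 e2 by (simp add: mult.assoc)
  then have "K^2 = (of_real (4*a*b))^2" using nz by simp
  then have K: "K = of_real (4*a*b) \<or> K = - of_real (4*a*b)"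
    by (simp add: power2_eq_iff)
  have KZ: "K = Z - 2 + inverse Z" unfolding K_def using nz(3)
    by (simp add: field_simps power2_eq_square)
  have "Im K = 0" using K by auto
  then have "Im Z - Im Z / ((Re Z)^2 + (Im Z)^2) = 0" unfolding KZ by (simp add: power2_eq_square)
  moreover have "(Re Z)^2 + (Im Z)^2 > 1" using nm(3) by (metis cmod_power2 one_less_power pos2)
  ultimately have "Im Z * ((Re Z)^2 + (Im Z)^2) = Im Z * 1"
    by (metis (no_types, lifting) eq_iff_diff_eq_0 mult.right_neutral nonzero_eq_divide_eq not_one_less_zero)
  then have "Im Z = 0" using \<open>(Re Z)^2 + (Im Z)^2 > 1\<close> by (metis less_irrefl mult_left_cancel)
  then show Zr: "Z = of_real (Re Z)" by (simp add: complex_eq_iff)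
  define z where "z = Re Z"
  have zabs: "\<bar>z\<bar> > 1" using nm(3) Zr unfolding z_def by (metis norm_of_real)
  have Kz: "K = of_real ((z-1)^2/z)" 
  proof -
    have "Z = of_real z" using Zr z_def by metis
    then show ?thesis unfolding K_def by simp
  qed
  have "a^2 \<le> 1^2" "b^2 \<le> 1^2" using a(2) b(2) by (smt (verit) zero_le_power2 one_power2)+
  then have a1: "a \<le> 1" "b \<le> 1" by (auto intro: power2_le_imp_le)
  have ab: "a*b \<le> 1" "a*b > 0" using a1 a(1) b(1) by (auto simp: mult_le_one)
  have KK: "(z-1)^2/z = 4*a*b \<or> (z-1)^2/z = -(4*a*b)"
    using K unfolding Kz of_real_minus[symmetric] of_real_eq_iff .
  have z1: "z > 1"
  proof (rule ccontr)
    assume "\<not> z > 1"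
    then have zn: "z < -1" using zabs by auto
    then have "(z+1)^2 > 0" by simp
    moreover have "(z-1)^2 = (z+1)^2 - 4*z" by (simp add: power2_eq_square algebra_simps)
    ultimately have "(z-1)^2 > -4*z" by linarith
    then have "(z-1)^2/z < -4" using zn by (simp add: divide_less_eq)
    moreover have "(z-1)^2/z = 4*a*b \<or> (z-1)^2/z = -(4*a*b)" using KK by auto
    ultimately show False using ab by auto
  qed
  have zab: "(z-1)^2/z = 4*a*b"
  proof -
    have "(z-1)^2/z = 4*a*b \<or> (z-1)^2/z = -(4*a*b)" using KK by auto
    moreover have "(z-1)^2/z \<ge> 0" using z1 by simp
    ultimately show ?thesis using ab by auto
  qed
  then have zab': "(z-1)^2/(4*z) = a*b" by simp
  have "1-p^2 = a^2" "1-q^2 = b^2" using a(2) b(2) by linarith+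
  then have g: "gz z = (1-p^2)*(1-q^2)" unfolding gz_def zab'
    by (simp add: power_mult_distrib)
  have zr: "z \<le> r0" using z_le_r0[OF z1] zab' ab by simp
  have "z \<noteq> r0"
  proof
    assume "z = r0"
    then have "(z-3)^2 = 8" using r0_bounds by simp
    then have "(z-1)^2 = 4 * z" by (simp add: power2_eq_square algebra_simps)
    then have "a*b = 1" using zab' z1 by simp
    moreover have "a*b \<le> a" using a1(2) a(1) by (simp add: mult_left_le)
    moreover have "a*b \<le> b" using a1(1) b(1) by (simp add: mult_left_le_one_le)
    ultimately have "a = 1" "b = 1" using a1 by linarith+
    then have "p = 0" "q = 0" using a(2) b(2) by auto
    then have "x = -1" "y = -1" using a(3) b(3) \<open>a = 1\<close> \<open>b = 1\<close> by (simp_all add: complex_eq_iff)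
    moreover have "Z = of_real r0" using Zr \<open>z = r0\<close> z_def by metis
    ultimately show False using nex unfolding r0_def by simp
  qed
  have pq: "p^2 < 1" "q^2 < 1" using a(1,2) b(1,2) by (smt (verit) zero_less_power2)+
  then have "-1 < p \<and> p < 1" "-1 < q \<and> q < 1" unfolding abs_square_less_1 abs_less_iff by auto
  moreover have "z < r0" using zr \<open>z \<noteq> r0\<close> by simp
  ultimately have "(z, p, q) \<in> TT" unfolding TT_def using z1 g by simp
  then show "(Re Z, Im (csqrt (-x)), Im (csqrt (-y))) \<in> TT"
    unfolding z_def p_def q_def .
qed


lemma EE_facts:
  assumes "(x,y,Z) \<in> EE"
  shows "norm x = 1" "norm y = 1" "x \<noteq> 1" "y \<noteq> 1"
proof -
  have nz: "x \<noteq> 0" "y \<noteq> 0" "Z \<noteq> 0" and Q0: "Q x y Z = 0" and nm: "norm x = 1" "norm y = 1" "norm Z > 1"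
    using assms by (auto simp: EE_def D_Q_def)
  show "norm x = 1" "norm y = 1" using nm by auto
  show "x \<noteq> 1" using not_one[OF Q0 nz(2,3) nm(3)] .
  have Q0': "Q y x Z = 0" using Q0 by (simp add: Q_def mult.commute mult.left_commute)
  show "y \<noteq> 1" using not_one[OF Q0' nz(1,3) nm(3)] .
qed

lemma x_repr:
  assumes "norm x = 1" "x \<noteq> 1"
  shows "x = - ((of_real (sqrt (1 - (Im (csqrt (-x)))^2)) + \<i> * of_real (Im (csqrt (-x))))^2)"
proof -
  define a where "a = Re (csqrt (-x))"
  define p where "p = Im (csqrt (-x))"
  have a: "a > 0" "a^2 + p^2 = 1" "x = - ((Complex a p)^2)"
    using unit_sqrt(1,2)[OF assms] unfolding a_def p_def complex.collapse
    by (auto intro: unit_sqrt(3)[OF assms])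
  have "a = sqrt (1 - p^2)" using a(1,2) by (metis add_diff_cancel_right' less_eq_real_def real_sqrt_unique)
  then show ?thesis using a(3) unfolding p_def[symmetric] by (simp add: Complex_eq)
qed

lemma not_nonpos:
  fixes x :: complex
  assumes "norm x = 1" "x \<noteq> 1"
  shows "-x \<notin> \<real>\<^sub>\<le>\<^sub>0"
proof
  assume "-x \<in> \<real>\<^sub>\<le>\<^sub>0"
  then have "Im x = 0" "Re x \<ge> 0" by (auto simp: complex_nonpos_Reals_iff)
  then have "x = of_real (Re x)" by (simp add: complex_eq_iff)
  moreover then have "Re x = 1" using assms(1) \<open>Re x \<ge> 0\<close> by (metis abs_of_nonneg norm_of_real)
  ultimately show False using assms(2) by simp
qed

definition Phi :: "complex \<times> complex \<times> complex \<Rightarrow> real \<times> real \<times> real" where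
  "Phi e = (Re (snd (snd e)), Im (csqrt (- fst e)), Im (csqrt (- fst (snd e))))"

definition Phinv :: "real \<times> real \<times> real \<Rightarrow> complex \<times> complex \<times> complex" where
  "Phinv t = (- ((of_real (sqrt (1 - (fst (snd t))^2)) + \<i> * of_real (fst (snd t)))^2),
              - ((of_real (sqrt (1 - (snd (snd t))^2)) + \<i> * of_real (snd (snd t)))^2),
              of_real (fst t))"

lemma circ_norm:
  assumes "p^2 < 1"
  shows "norm (- ((of_real (sqrt (1 - p^2)) + \<i> * of_real p)^2)) = 1"
    "csqrt ((of_real (sqrt (1 - p^2)) + \<i> * of_real p)^2) = of_real (sqrt (1 - p^2)) + \<i> * of_real p"
    "(- ((of_real (sqrt (1 - p^2)) + \<i> * of_real p)^2) - 1)^2 = 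
       - 4 * (of_real (sqrt (1 - p^2)))^2 * (- ((of_real (sqrt (1 - p^2)) + \<i> * of_real p)^2))"
proof -
  define a where "a = sqrt (1 - p^2)"
  have a: "a > 0" "a^2 + p^2 = 1" using assms unfolding a_def by auto
  have w: "of_real a + \<i> * of_real p = Complex a p" by (simp add: Complex_eq)
  show "norm (- ((of_real (sqrt (1 - p^2)) + \<i> * of_real p)^2)) = 1"
    unfolding a_def[symmetric] w norm_minus_cancel norm_power using a(2)
    by (simp add: cmod_def)
  show "csqrt ((of_real (sqrt (1 - p^2)) + \<i> * of_real p)^2) = of_real (sqrt (1 - p^2)) + \<i> * of_real p"
    unfolding a_def[symmetric] w using a(1) by (intro csqrt_unique) auto
  show "(- ((of_real (sqrt (1 - p^2)) + \<i> * of_real p)^2) - 1)^2 = 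
       - 4 * (of_real (sqrt (1 - p^2)))^2 * (- ((of_real (sqrt (1 - p^2)) + \<i> * of_real p)^2))"
    unfolding a_def[symmetric] w using sq_id[OF a(2)] .
qed

lemma TT_facts:
  assumes "(z,p,q) \<in> TT"
  shows "p^2 < 1" "q^2 < 1" "1 < z" "z < r0" "(1-p^2)*(1-q^2) = gz z"
  using assms unfolding TT_def by (auto simp: abs_square_less_1 abs_less_iff)

lemma TT_to_EE:
  assumes "t \<in> TT"
  shows "Phinv t \<in> EE" "Phi (Phinv t) = t"
proof -
  obtain z p q where t: "t = (z,p,q)" by (metis prod.collapse)
  note f = TT_facts[OF assms[unfolded t]]
  define x where "x = - ((of_real (sqrt (1 - p^2)) + \<i> * of_real p)^2)"
  define y where "y = - ((of_real (sqrt (1 - q^2)) + \<i> * of_real q)^2)"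
  have P: "Phinv t = (x, y, of_real z)" unfolding Phinv_def t x_def y_def by simp
  have nx: "norm x = 1" "norm y = 1" using circ_norm(1) f(1,2) unfolding x_def y_def by auto
  have c1: "Im (csqrt (-x)) = p" by (subst x_def, subst minus_minus, subst circ_norm(2)[OF f(1)]) simp
  have c2: "Im (csqrt (-y)) = q" by (subst y_def, subst minus_minus, subst circ_norm(2)[OF f(2)]) simp
  show "Phi (Phinv t) = t" unfolding P Phi_def using c1 c2 t by simp
  have ex: "(x-1)^2 = - 4 * (of_real (sqrt (1 - p^2)))^2 * x" unfolding x_def using circ_norm(3)[OF f(1)] .
  have ey: "(y-1)^2 = - 4 * (of_real (sqrt (1 - q^2)))^2 * y" unfolding y_def using circ_norm(3)[OF f(2)] .
  have s1: "(sqrt (1 - p^2))^2 = 1 - p^2" "(sqrt (1 - q^2))^2 = 1 - q^2" using f(1,2) by auto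
  have "(x-1)^2 * (y-1)^2 = of_real (16 * ((1-p^2)*(1-q^2))) * x * y"
    unfolding ex ey by (simp add: s1 flip: of_real_power) (rule disjI2, rule disjI2, simp add: algebra_simps)
  also have "\<dots> = of_real (16 * gz z) * x * y" using f(5) by simp
  also have "16 * gz z = (z-1)^4/z^2" unfolding gz_def by (simp add: power_divide power2_eq_square power4_eq_xxxx)
  finally have "Q x y (of_real z) = 0" unfolding Q_def by simp
  moreover have "x \<noteq> 0" "y \<noteq> 0" using nx by auto
  moreover have "norm (complex_of_real z) > 1" "complex_of_real z \<noteq> 0" using f(3) by auto
  moreover have "complex_of_real z \<noteq> complex_of_real (3 + 2 * sqrt 2)" by (metis f(4) less_irrefl of_real_eq_iff r0_def)
  ultimately show "Phinv t \<in> EE" unfolding P EE_def D_Q_def using nx by auto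
qed

lemma Phi_homeo: "homeomorphism EE TT Phi Phinv"
proof (rule homeomorphismI)
  show "Phi ` EE \<subseteq> TT"
  proof
    fix t assume "t \<in> Phi ` EE"
    then obtain x y Z where "(x,y,Z) \<in> EE" "t = Phi (x,y,Z)" by auto
    then show "t \<in> TT" using EE_to_TT(1) unfolding Phi_def by auto
  qed
  show "Phinv ` TT \<subseteq> EE" using TT_to_EE by auto
  show "Phi (Phinv t) = t" if "t \<in> TT" for t using TT_to_EE that by auto
  show "Phinv (Phi e) = e" if "e \<in> EE" for e
  proof -
    obtain x y Z where e: "e = (x,y,Z)" by (metis prod.collapse)
    note f = EE_facts[OF that[unfolded e]]
    show ?thesis unfolding e Phi_def Phinv_def using x_repr[OF f(1,3)] x_repr[OF f(2,4)]
      EE_to_TT(2)[OF that[unfolded e], symmetric] by simp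
  qed
  show "continuous_on TT Phinv" unfolding Phinv_def by (intro continuous_intros)
  show "continuous_on EE Phi" unfolding Phi_def
  proof (intro continuous_intros)
    show "continuous_on EE (\<lambda>e. csqrt (- fst e))"
    proof (rule continuous_on_compose2[OF continuous_on_csqrt])
      show "continuous_on EE (\<lambda>e. - fst e)" by (intro continuous_intros)
      show "(\<lambda>e. - fst e) ` EE \<subseteq> - \<real>\<^sub>\<le>\<^sub>0"
      proof
        fix w assume "w \<in> (\<lambda>e. - fst e) ` EE"
        then obtain x y Z where e: "(x,y,Z) \<in> EE" "w = - fst (x,y,Z)" by auto
        show "w \<in> - \<real>\<^sub>\<le>\<^sub>0" using not_nonpos[OF EE_facts(1,3)[OF e(1)]] e(2) by simp
      qed
    qed
    show "continuous_on EE (\<lambda>e. csqrt (- fst (snd e)))"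
    proof (rule continuous_on_compose2[OF continuous_on_csqrt])
      show "continuous_on EE (\<lambda>e. - fst (snd e))" by (intro continuous_intros)
      show "(\<lambda>e. - fst (snd e)) ` EE \<subseteq> - \<real>\<^sub>\<le>\<^sub>0"
      proof
        fix w assume "w \<in> (\<lambda>e. - fst (snd e)) ` EE"
        then obtain x y Z where e: "(x,y,Z) \<in> EE" "w = - fst (snd (x,y,Z))" by auto
        show "w \<in> - \<real>\<^sub>\<le>\<^sub>0" using not_nonpos[OF EE_facts(2,4)[OF e(1)]] e(2) by simp
      qed
    qed
  qed
qed



lemma fwd:
  fixes k g p q :: real
  assumes k: "k*(1-g) = 3/4" and g: "0<g" "g<1" and pq: "p^2<1" "q^2<1" "(1-p^2)*(1-q^2) = g"
  shows "k*p^2 \<le> 3/4" "(sqrt k * p)^2 < 1" "(q * sqrt (k*(1-p^2)/(1-k*p^2)))^2 < 1"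
    "(1-(sqrt k*p)^2)*(1-(q * sqrt (k*(1-p^2)/(1-k*p^2)))^2) = 1/4"
proof -
  have "k = (3/4)/(1-g)" using k g by (simp add: field_simps)
  then have kp: "k > 0" using g by simp
  have "(1-p^2)*(1-q^2) \<le> 1-p^2" by (rule mult_left_le) (use pq in auto)
  then have "1-p^2 \<ge> g" using pq by simp
  then have "p^2 \<le> 1-g" by simp
  then have "k*p^2 \<le> k*(1-g)" using kp by simp
  then show kp2: "k*p^2 \<le> 3/4" using k by simp
  have s: "(sqrt k * p)^2 = k*p^2" using kp by (simp add: power_mult_distrib)
  then show "(sqrt k * p)^2 < 1" using kp2 by simp
  have d: "1 - k*p^2 > 0" using kp2 by simp
  have n: "k*(1-p^2)/(1-k*p^2) \<ge> 0" using d kp pq by simp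
  have q2: "(q * sqrt (k*(1-p^2)/(1-k*p^2)))^2 = q^2 * (k*(1-p^2)/(1-k*p^2))"
    using n by (simp add: power_mult_distrib)
  have key: "(1-k*p^2) - q^2*(k*(1-p^2)) = 1/4"
  proof -
    have "(1-k*p^2) - q^2*(k*(1-p^2)) = 1 - k*(1 - (1-p^2)*(1-q^2))" by (simp add: algebra_simps)
    also have "\<dots> = 1/4" using pq(3) k by (simp add: algebra_simps)
    finally show ?thesis .
  qed
  have e: "1 - (q * sqrt (k*(1-p^2)/(1-k*p^2)))^2 = (1/4)/(1-k*p^2)"
  proof -
    have "1 - q^2*(k*(1-p^2)/(1-k*p^2)) = ((1-k*p^2) - q^2*(k*(1-p^2)))/(1-k*p^2)"
      using d by (simp add: field_simps)
    then show ?thesis unfolding q2 key .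
  qed
  have f: "(1 - k*p^2) * ((1/4)/(1-k*p^2)) = 1/4" using d by simp
  show "(1-(sqrt k*p)^2)*(1-(q * sqrt (k*(1-p^2)/(1-k*p^2)))^2) = 1/4"
    by (simp only: e s f)
  show "(q * sqrt (k*(1-p^2)/(1-k*p^2)))^2 < 1" using e d
    by (smt (verit) divide_pos_pos)
qed

lemma bwd:
  fixes k g a b :: real
  assumes k: "k*(1-g) = 3/4" and g: "0<g" "g<1" and ab: "a^2<1" "b^2<1" "(1-a^2)*(1-b^2) = 1/4"
  shows "a^2 \<le> 3/4" "k - a^2 > 0" "(a / sqrt k)^2 < 1" "(b * sqrt ((1-a^2)/(k-a^2)))^2 < 1"
    "(1-(a / sqrt k)^2)*(1-(b * sqrt ((1-a^2)/(k-a^2)))^2) = g"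
proof -
  have "k = (3/4)/(1-g)" using k g by (simp add: field_simps)
  then have "k > 0" using g by simp
  then have "g*k > 0" using g by simp
  moreover have "k = 3/4 + g*k" using k by (simp add: algebra_simps)
  ultimately have kp: "k > 3/4" by linarith
  have "(1-a^2)*(1-b^2) \<le> 1-a^2" by (rule mult_left_le) (use ab in auto)
  then have "1-a^2 \<ge> 1/4" using ab by simp
  then show a2: "a^2 \<le> 3/4" by simp
  then show d: "k - a^2 > 0" using kp by simp
  have s: "(a / sqrt k)^2 = a^2/k" using kp by (simp add: power_divide)
  then show "(a / sqrt k)^2 < 1" using d kp by simp
  have n: "(1-a^2)/(k-a^2) \<ge> 0" using d ab by simp
  have q2: "(b * sqrt ((1-a^2)/(k-a^2)))^2 = b^2 * ((1-a^2)/(k-a^2))"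
    using n by (simp add: power_mult_distrib)
  have kg: "g = 1 - (3/4)/k" using k kp by (simp add: field_simps)
  have "(1-a^2/k)*(1 - b^2 * ((1-a^2)/(k-a^2))) = (k - a^2 - b^2*(1-a^2))/k"
    using d kp by (simp add: field_simps)
  also have "k - a^2 - b^2*(1-a^2) = k - 1 + (1-a^2)*(1-b^2)" by (simp add: algebra_simps)
  also have "(k - 1 + (1-a^2)*(1-b^2))/k = g" unfolding ab(3) kg using kp by (simp add: field_simps)
  finally have fin: "(1-a^2/k)*(1 - b^2 * ((1-a^2)/(k-a^2))) = g" .
  then show "(1-(a / sqrt k)^2)*(1-(b * sqrt ((1-a^2)/(k-a^2)))^2) = g" unfolding s q2 .
  have "1 - a^2/k > 0" using d kp by (simp add: field_simps)
  then have "1 - b^2 * ((1-a^2)/(k-a^2)) > 0" using fin g zero_less_mult_pos by metis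
  then show "(b * sqrt ((1-a^2)/(k-a^2)))^2 < 1" unfolding q2 by simp
qed

lemma round1:
  fixes k a b :: real
  assumes "k > 0" "a^2 < 1" "k - a^2 > 0"
  shows "sqrt k * (a / sqrt k) = a"
    "b * sqrt ((1-a^2)/(k-a^2)) * sqrt (k*(1-(a / sqrt k)^2)/(1-k*(a / sqrt k)^2)) = b"
proof -
  show "sqrt k * (a / sqrt k) = a" using assms by simp
  have "k*(1-(a / sqrt k)^2) = k - a^2" using assms by (simp add: power_divide field_simps)
  moreover have "k*(a / sqrt k)^2 = a^2" using assms by (simp add: power_divide)
  ultimately have "sqrt ((1-a^2)/(k-a^2)) * sqrt (k*(1-(a / sqrt k)^2)/(1-k*(a / sqrt k)^2)) = 1"
    using assms by (simp flip: real_sqrt_mult)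
  then show "b * sqrt ((1-a^2)/(k-a^2)) * sqrt (k*(1-(a / sqrt k)^2)/(1-k*(a / sqrt k)^2)) = b"
    by (simp add: mult.assoc)
qed

lemma round2:
  fixes k p q :: real
  assumes "k > 0" "p^2 < 1" "1 - k*p^2 > 0"
  shows "sqrt k * p / sqrt k = p"
    "q * sqrt (k*(1-p^2)/(1-k*p^2)) * sqrt ((1-(sqrt k * p)^2)/(k-(sqrt k * p)^2)) = q"
proof -
  show "sqrt k * p / sqrt k = p" using assms by simp
  have "(sqrt k * p)^2 = k*p^2" using assms by (simp add: power_mult_distrib)
  moreover have "k - k*p^2 = k*(1-p^2)" by (simp add: algebra_simps)
  ultimately have "sqrt (k*(1-p^2)/(1-k*p^2)) * sqrt ((1-(sqrt k * p)^2)/(k-(sqrt k * p)^2)) = 1"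
    using assms by (simp flip: real_sqrt_mult)
  then show "q * sqrt (k*(1-p^2)/(1-k*p^2)) * sqrt ((1-(sqrt k * p)^2)/(k-(sqrt k * p)^2)) = q"
    by (simp add: mult.assoc)
qed

definition kap :: "real \<Rightarrow> real" where "kap z = (3/4)/(1 - gz z)"

lemma kap_facts:
  assumes "1 < z" "z < r0"
  shows "kap z * (1 - gz z) = 3/4" "kap z > 0" "0 < gz z" "gz z < 1"
  using gz_bounds[OF assms] unfolding kap_def by (auto simp: field_simps)

lemma continuous_on_kap: "continuous_on {1<..<r0} kap"
proof -
  have "\<And>z. z \<in> {1<..<r0} \<Longrightarrow> 1 - ((z-1)^2/(4*z))^2 \<noteq> 0" using gz_bounds unfolding gz_def by fastforce
  then show ?thesis unfolding kap_def gz_def by (intro continuous_intros) auto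
qed

lemma continuous_on_kap' [continuous_intros]:
  "continuous_on S f \<Longrightarrow> (\<And>x. x \<in> S \<Longrightarrow> f x \<in> {1<..<r0}) \<Longrightarrow> continuous_on S (\<lambda>x. kap (f x))"
  by (rule continuous_on_compose2[OF continuous_on_kap]) auto

definition FF :: "(complex \<times> complex \<times> complex) set" where
  "FF = {(of_real a, of_real b, 0) | a b. a^2 < 1 \<and> b^2 < 1 \<and> (1-a^2)*(1-b^2) = 1/4}"

definition BB :: "complex set" where "BB = complex_of_real ` {1 <..< 3 + 2 * sqrt 2}"

definition Psi :: "real \<times> real \<times> real \<Rightarrow> complex \<times> complex \<times> complex \<times> complex" where
  "Psi t = (of_real (fst t), of_real (sqrt (kap (fst t)) * fst (snd t)),
     of_real (snd (snd t) * sqrt (kap (fst t) * (1 - (fst (snd t))^2) / (1 - kap (fst t) * (fst (snd t))^2))), 0)"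

definition Psinv :: "complex \<times> complex \<times> complex \<times> complex \<Rightarrow> real \<times> real \<times> real" where
  "Psinv u = (Re (fst u), Re (fst (snd u)) / sqrt (kap (Re (fst u))),
     Re (fst (snd (snd u))) * sqrt ((1 - (Re (fst (snd u)))^2) / (kap (Re (fst u)) - (Re (fst (snd u)))^2)))"

lemma sq_lt1: "(p::real)^2 < 1 \<longleftrightarrow> -1 < p \<and> p < 1"
  unfolding abs_square_less_1 abs_less_iff by auto

lemma Psi_fwd:
  assumes "t \<in> TT"
  shows "Psi t \<in> BB \<times> FF" "Psinv (Psi t) = t" "1 - kap (fst t) * (fst (snd t))^2 \<noteq> 0"
proof -
  obtain z p q where t: "t = (z,p,q)" by (metis prod.collapse)
  note f = TT_facts[OF assms[unfolded t]]
  note k = kap_facts[OF f(3,4)]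
  note F = fwd[OF k(1) k(3,4) f(1,2) f(5)]
  show "1 - kap (fst t) * (fst (snd t))^2 \<noteq> 0" using F(1) t by simp
  have "of_real z \<in> BB" using f(3,4) unfolding BB_def r0_def by auto
  moreover have "(of_real (sqrt (kap z) * p), of_real (q * sqrt (kap z * (1 - p^2) / (1 - kap z * p^2))), 0) \<in> FF"
    unfolding FF_def using F(2-4) by blast
  ultimately show "Psi t \<in> BB \<times> FF" unfolding Psi_def t by simp
  have r: "sqrt (kap z) * p / sqrt (kap z) = p"
    "q * sqrt (kap z*(1-p^2)/(1-kap z*p^2)) * sqrt ((1-(sqrt (kap z) * p)^2)/(kap z-(sqrt (kap z) * p)^2)) = q"
    using round2[OF k(2) f(1)] F(1) by auto
  have P: "Psi t = (of_real z, of_real (sqrt (kap z) * p), of_real (q * sqrt (kap z*(1-p^2)/(1-kap z*p^2))), 0)"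
    unfolding Psi_def t by simp
  show "Psinv (Psi t) = t" unfolding P Psinv_def fst_conv snd_conv Re_complex_of_real r using t by simp
qed

lemma Psi_bwd:
  assumes "u \<in> BB \<times> FF"
  shows "Psinv u \<in> TT" "Psi (Psinv u) = u" "kap (Re (fst u)) - (Re (fst (snd u)))^2 \<noteq> 0"
    "Re (fst u) \<in> {1<..<r0}"
proof -
  obtain z a b where u: "u = (of_real z, of_real a, of_real b, 0)" and z: "1 < z" "z < r0"
    and ab: "a^2 < 1" "b^2 < 1" "(1-a^2)*(1-b^2) = 1/4"
    using assms unfolding BB_def FF_def r0_def by auto
  note k = kap_facts[OF z]
  note B = bwd[OF k(1) k(3,4) ab]
  show "kap (Re (fst u)) - (Re (fst (snd u)))^2 \<noteq> 0" using B(2) u by simp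
  show "Re (fst u) \<in> {1<..<r0}" using z u by simp
  show "Psinv u \<in> TT" unfolding Psinv_def u TT_def using B(3-5) z by (simp add: sq_lt1)
  have r: "sqrt (kap z) * (a / sqrt (kap z)) = a"
    "b * sqrt ((1-a^2)/(kap z-a^2)) * sqrt (kap z*(1-(a / sqrt (kap z))^2)/(1-kap z*(a / sqrt (kap z))^2)) = b"
    using round1[OF k(2) ab(1) B(2)] by auto
  have P: "Psinv u = (z, a / sqrt (kap z), b * sqrt ((1-a^2)/(kap z-a^2)))" unfolding Psinv_def u by simp
  show "Psi (Psinv u) = u" unfolding P Psi_def fst_conv snd_conv r using u by simp
qed

lemma Psi_homeo: "homeomorphism TT (BB \<times> FF) Psi Psinv"
proof (rule homeomorphismI)
  show "Psi ` TT \<subseteq> BB \<times> FF" unfolding image_subset_iff using Psi_fwd(1) by blast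
  show "Psinv ` (BB \<times> FF) \<subseteq> TT" unfolding image_subset_iff using Psi_bwd(1) by blast
  show "Psinv (Psi t) = t" if "t \<in> TT" for t using Psi_fwd that by auto
  show "Psi (Psinv u) = u" if "u \<in> BB \<times> FF" for u using Psi_bwd that by auto
  have A1: "fst t \<in> {1<..<r0}" if "t \<in> TT" for t
    using that unfolding TT_def by auto
  have A2: "\<forall>t\<in>TT. 1 - kap (fst t) * (fst (snd t))^2 \<noteq> 0"
    using Psi_fwd(3) by blast
  show "continuous_on TT Psi" unfolding Psi_def
    by (intro continuous_intros; (erule A1 | rule A2))
  have B1: "Re (fst u) \<in> {1<..<r0}" if "u \<in> BB \<times> FF" for u
    using Psi_bwd(4)[OF that] .
  have B2: "\<forall>u\<in>BB \<times> FF. kap (Re (fst u)) - (Re (fst (snd u)))^2 \<noteq> 0"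
    using Psi_bwd(3) by blast
  have B3: "\<forall>u\<in>BB \<times> FF. sqrt (kap (Re (fst u))) \<noteq> 0"
    using Psi_bwd(4) kap_facts(2) by fastforce
  show "continuous_on (BB \<times> FF) Psinv" unfolding Psinv_def
    by (intro continuous_intros; (erule B1 | rule B2 | rule B3))
qed


lemma FF_ne: "FF \<noteq> {}"
proof -
  have "(sqrt 3 / 2)^2 = (3/4::real)" by (simp add: power_divide)
  then have "(of_real 0, of_real (sqrt 3 / 2), 0) \<in> FF" unfolding FF_def by force
  then show ?thesis by auto
qed

theorem lemma9p3:
  shows "locally_trivial_fibration
           (D_Q - {(-1, -1, complex_of_real (3 + 2 * sqrt 2))})
           (\<lambda>(x, y, Z). Z)
           (complex_of_real ` {1 <..< 3 + 2 * sqrt 2})"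
proof -
  let ?p = "\<lambda>(x::complex, y::complex, Z::complex). Z"
  have H: "homeomorphism EE (BB \<times> FF) (Psi \<circ> Phi) (Phinv \<circ> Psinv)"
    by (rule homeomorphism_compose[OF Phi_homeo Psi_homeo])
  have fh: "fst ((Psi \<circ> Phi) e) = ?p e" if "e \<in> EE" for e
  proof -
    obtain x y Z where e: "e = (x,y,Z)" by (metis prod.collapse)
    show ?thesis using EE_to_TT(2)[OF that[unfolded e], symmetric] unfolding e Phi_def Psi_def by simp
  qed
  have img: "(Psi \<circ> Phi) ` EE = BB \<times> FF" using H unfolding homeomorphism_def by blast
  have pE: "?p ` EE = BB"
  proof -
    have "fst ` (Psi \<circ> Phi) ` EE = (\<lambda>e. fst ((Psi \<circ> Phi) e)) ` EE" by (simp add: image_image)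
    also have "\<dots> = ?p ` EE" using fh by (rule image_cong[OF refl])
    finally have "?p ` EE = fst ` (Psi \<circ> Phi) ` EE" ..
    also have "\<dots> = BB" unfolding img using FF_ne by auto
    finally show ?thesis .
  qed
  have cont: "continuous_on EE ?p" by (simp add: split_beta continuous_intros)
  show ?thesis
    unfolding locally_trivial_fibration_def EE_def[symmetric] BB_def[symmetric]
  proof (intro conjI cont pE ballI)
    fix b assume "b \<in> BB"
    show "\<exists>U. openin (top_of_set BB) U \<and> b \<in> U \<and>
        (\<exists>(F :: (complex \<times> complex \<times> complex) set) h k. homeomorphism (EE \<inter> ?p -` U) (U \<times> F) h k \<and>
              (\<forall>e \<in> EE \<inter> ?p -` U. fst (h e) = ?p e))"
    proof (intro exI conjI)
      show "openin (top_of_set BB) BB" by simp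
      show "b \<in> BB" by fact
      have "EE \<inter> ?p -` BB = EE" using pE by auto
      then show "homeomorphism (EE \<inter> ?p -` BB) (BB \<times> FF) (Psi \<circ> Phi) (Phinv \<circ> Psinv)" using H by simp
      show "\<forall>e \<in> EE \<inter> ?p -` BB. fst ((Psi \<circ> Phi) e) = ?p e" using fh by auto
    qed
  qed
qed

end
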